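(* Let $\Omega$ be a weighted clone, $\omega_1,\dots,\omega_n\in\Omega$, and $c_1,\dots,c_n\ge0$ real numbers. Let $\ell_i$ denote the arity of $\omega_i$. For each $1\le i\le n$ and $1\le j\le\ell_i$ let $g_{i,j}\in\mathrm{supp}(\Omega)$ be a $k$-ary operation (for a fixed $k$). If the function $\mu=\sum_{i=1}^n c_i\cdot\omega_i[g_{i,1},\dots,g_{i,\ell_i}]$ is a proper weighting, then $\mu\in\Omega$.
   Context: $D$ is a fixed finite set with $|D|\ge2$. A $k$-ary operation is $f:D^k\to D$; $\mathbf{O}^{(k)}_D$ is the set of $k$-ary operations. Projections: $e^{(k)}_i(x_1,\dots,x_k)=x_i$; $\mathbf{J}_D$ is the set of all projections, $\mathbf{J}_D^{(k)}$ the $k$-ary ones. Superposition of operations: $f[g_1,\dots,g_k](\mathbf{x})=f(g_1(\mathbf{x}),\dots,g_k(\mathbf{x}))$. A $k$-ary (proper) weighting is a function $\omega:\mathbf{O}^{(k)}_D\to\mathbb{R}$ with $\sum_f\omega(f)=0$ and $\omega(f)<0$ only if $f$ is a projection (a function with zero sum that is negative on some non-projection is an improper weighting). $\mathrm{supp}(\omega)=\mathbf{J}_D^{(k)}\cup\{f:\omega(f)>0\}$, and for a non-empty set $\Omega$ of weightings, $\mathrm{supp}(\Omega)=\mathbf{J}_D\cup\bigcup_{\omega\in\Omega}\mathrm{supp}(\omega)$. For $\omega:\mathbf{O}^{(\ell)}_D\to\mathbb{R}$ and $k$-ary $g_1,\dots,g_\ell$, the superposition $\omega[g_1,\dots,g_\ell]:\mathbf{O}^{(k)}_D\to\mathbb{R}$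 is $\omega[g_1,\dots,g_\ell](f')=\sum_{f:f[g_1,\dots,g_\ell]=f'}\omega(f)$; it is proper if it is a proper weighting. Topology: the $k$-ary weightings lie in $\mathbb{R}^{\mathbf{O}^{(k)}_D}$ (Euclidean topology), with the disjoint union topology over $k$. A weighted clone is a non-empty set $\Omega$ of weightings closed under scaling by non-negative reals, addition of weightings of equal arity, and proper superposition with operations from $\mathrm{supp}(\Omega)$, and topologically closed. *)

theory Defs
  imports "HOL-Analysis.Analysis"
begin

text \<open>A k-ary operation on the finite domain 'd is represented as a function on
lists which is only meaningful on lists of length k (value undefined elsewhere).\<close>

definition ops :: "nat \<Rightarrow> ('d list \<Rightarrow> 'd) set" where
  "ops k = {f. \<forall>xs. length xs \<noteq> k \<longrightarrow> f xs = undefined}"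

definition proj :: "nat \<Rightarrow> nat \<Rightarrow> ('d list \<Rightarrow> 'd)" where
  "proj k i = (\<lambda>xs. if length xs = k then xs ! i else undefined)"

definition projs :: "nat \<Rightarrow> ('d list \<Rightarrow> 'd) set" where
  "projs k = proj k ` {..<k}"

definition superpos :: "nat \<Rightarrow> ('d list \<Rightarrow> 'd) \<Rightarrow> ('d list \<Rightarrow> 'd) list \<Rightarrow> ('d list \<Rightarrow> 'd)" where
  "superpos k f gs = (\<lambda>xs. if length xs = k then f (map (\<lambda>g. g xs) gs) else undefined)"

definition weighting :: "nat \<Rightarrow> (('d list \<Rightarrow> 'd) \<Rightarrow> real) \<Rightarrow> bool" where
  "weighting k w \<longleftrightarrow> (\<forall>f. f \<notin> ops k \<longrightarrow> w f = 0) \<and> sum w (ops k) = 0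
     \<and> (\<forall>f \<in> ops k. w f < 0 \<longrightarrow> f \<in> projs k)"

definition supp_w :: "nat \<Rightarrow> (('d list \<Rightarrow> 'd) \<Rightarrow> real) \<Rightarrow> ('d list \<Rightarrow> 'd) set" where
  "supp_w k w = projs k \<union> {f \<in> ops k. w f > 0}"

definition supp :: "(nat \<times> (('d list \<Rightarrow> 'd) \<Rightarrow> real)) set \<Rightarrow> (nat \<times> ('d list \<Rightarrow> 'd)) set" where
  "supp \<Omega> = {(k, f) | k f. 0 < k \<and> f \<in> projs k}
             \<union> {(k, f) | k w f. (k, w) \<in> \<Omega> \<and> f \<in> supp_w k w}"

definition wsuperpos :: "nat \<Rightarrow> (('d list \<Rightarrow> 'd) \<Rightarrow> real) \<Rightarrow> ('d list \<Rightarrow> 'd) list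
    \<Rightarrow> (('d list \<Rightarrow> 'd) \<Rightarrow> real)" where
  "wsuperpos k w gs = (\<lambda>f'. \<Sum>f \<in> ops (length gs). if superpos k f gs = f' then w f else 0)"

definition weighted_clone :: "(nat \<times> (('d::finite list \<Rightarrow> 'd) \<Rightarrow> real)) set \<Rightarrow> bool" where
  "weighted_clone \<Omega> \<longleftrightarrow>
     \<Omega> \<noteq> {}
   \<and> (\<forall>(k, w) \<in> \<Omega>. 0 < k \<and> weighting k w)
   \<and> (\<forall>k w c. (k, w) \<in> \<Omega> \<and> c \<ge> 0 \<longrightarrow> (k, (\<lambda>f. c * w f)) \<in> \<Omega>)
   \<and> (\<forall>k w1 w2. (k, w1) \<in> \<Omega> \<and> (k, w2) \<in> \<Omega> \<longrightarrow> (k, (\<lambda>f. w1 f + w2 f)) \<in> \<Omega>)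
   \<and> (\<forall>l w k gs. (l, w) \<in> \<Omega> \<and> 0 < k \<and> length gs = l
        \<and> (\<forall>g \<in> set gs. g \<in> ops k \<and> (k, g) \<in> supp \<Omega>)
        \<and> weighting k (wsuperpos k w gs)
        \<longrightarrow> (k, wsuperpos k w gs) \<in> \<Omega>)
   \<and> (\<forall>k. closed {w. (k, w) \<in> \<Omega>})"

end

theory Submission
  imports Defs
begin


lemma finite_ops: "finite (ops k :: ('d::finite list \<Rightarrow> 'd) set)"
proof -
  have "ops k = PiE {xs::'d list. length xs = k} (\<lambda>_. UNIV)"
    unfolding ops_def PiE_def extensional_def Pi_def by auto
  moreover have "finite {xs::'d list. length xs = k}"
    using finite_lists_length_eq[of "UNIV::'d set" k] by simp
  ultimately show ?thesis by (simp add: finite_PiE)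
qed

lemma superpos_ops: "superpos k f gs \<in> ops k"
  by (simp add: superpos_def ops_def)

lemma superpos_superpos:
  "length G = L \<Longrightarrow> superpos k (superpos L f ps) G = superpos k f (map (\<lambda>p. superpos k p G) ps)"
  unfolding superpos_def by (simp add: fun_eq_iff comp_def)

lemma if_sum0: "(if P then sum a S else 0) = (\<Sum>x\<in>S. if P then a x else (0::real))"
  by simp

lemma wsuperpos_comp:
  fixes w :: "('d::finite list \<Rightarrow> 'd) \<Rightarrow> real"
  assumes "length G = L"
  shows "wsuperpos k (wsuperpos L w ps) G f' = wsuperpos k w (map (\<lambda>p. superpos k p G) ps) f'"
proof -
  have "wsuperpos k (wsuperpos L w ps) G f' =
     (\<Sum>h\<in>ops L. \<Sum>f\<in>ops (length ps). if superpos L f ps = h then (if superpos k h G = f' then w f else 0) else 0)"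
    unfolding wsuperpos_def assms
    apply (intro sum.cong refl)
    subgoal for h by (cases "superpos k h G = f'") (auto intro!: sum.neutral sum.cong)
    done
  also have "\<dots> = (\<Sum>f\<in>ops (length ps). \<Sum>h\<in>ops L. if superpos L f ps = h then (if superpos k h G = f' then w f else 0) else 0)"
    by (rule sum.swap)
  also have "\<dots> = (\<Sum>f\<in>ops (length ps). if superpos k (superpos L f ps) G = f' then w f else 0)"
    by (intro sum.cong refl) (simp add: finite_ops superpos_ops)
  also have "\<dots> = wsuperpos k w (map (\<lambda>p. superpos k p G) ps) f'"
    unfolding wsuperpos_def using superpos_superpos[OF assms] by simp
  finally show ?thesis .
qed

lemma wsuperpos_lin:
  "wsuperpos k (\<lambda>f. \<Sum>i\<in>I. c i * w i f) G f' = (\<Sum>i\<in>I. c i * wsuperpos k (w i) G f')"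
proof -
  have "wsuperpos k (\<lambda>f. \<Sum>i\<in>I. c i * w i f) G f' =
      (\<Sum>f\<in>ops (length G). \<Sum>i\<in>I. c i * (if superpos k f G = f' then w i f else 0))"
    unfolding wsuperpos_def by (intro sum.cong refl) auto
  also have "\<dots> = (\<Sum>i\<in>I. c i * wsuperpos k (w i) G f')"
    unfolding wsuperpos_def by (subst sum.swap) (simp add: sum_distrib_left)
  finally show ?thesis .
qed

lemma superpos_proj:
  assumes "\<forall>j<l. \<sigma> j < L" "i < l"
  shows "superpos L (proj l i) (map (\<lambda>j. proj L (\<sigma> j)) [0..<l]) = proj L (\<sigma> i)"
  using assms unfolding superpos_def proj_def by (auto simp: fun_eq_iff)

lemma weighting_lift:
  fixes w :: "('d::finite list \<Rightarrow> 'd) \<Rightarrow> real"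
  assumes W: "weighting l w" and S: "\<forall>j<l. \<sigma> j < L"
  shows "weighting L (wsuperpos L w (map (\<lambda>j. proj L (\<sigma> j)) [0..<l]))"
proof -
  let ?ps = "map (\<lambda>j. proj L (\<sigma> j)) [0..<l]"
  have len: "length ?ps = l" by simp
  have a: "\<forall>f. f \<notin> ops L \<longrightarrow> wsuperpos L w ?ps f = 0"
    unfolding wsuperpos_def by (auto intro!: sum.neutral simp: superpos_ops)
  have "sum (wsuperpos L w ?ps) (ops L) =
     (\<Sum>f\<in>ops l. \<Sum>h\<in>ops L. if superpos L f ?ps = h then w f else 0)"
    unfolding wsuperpos_def len by (rule sum.swap)
  also have "\<dots> = sum w (ops l)"
    by (intro sum.cong refl) (simp add: finite_ops superpos_ops)
  also have "\<dots> = 0" using W unfolding weighting_def by simp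
  finally have b: "sum (wsuperpos L w ?ps) (ops L) = 0" .
  have c: "f' \<in> projs L" if "f' \<in> ops L" "wsuperpos L w ?ps f' < 0" for f'
  proof -
    have "\<exists>f\<in>ops l. (if superpos L f ?ps = f' then w f else 0) < 0"
    proof (rule ccontr)
      assume "\<not> ?thesis"
      then have "0 \<le> wsuperpos L w ?ps f'" unfolding wsuperpos_def len
        by (intro sum_nonneg) (simp add: not_less)
      with that show False by simp
    qed
    then obtain f where f: "f \<in> ops l" "superpos L f ?ps = f'" "w f < 0"
      by (auto split: if_splits)
    then have "f \<in> projs l" using W unfolding weighting_def by auto
    then obtain i where i: "i < l" "f = proj l i" unfolding projs_def by auto
    then have "f' = proj L (\<sigma> i)" using f(2) superpos_proj[OF S i(1)] i(2) by metis
    then show ?thesis using S i unfolding projs_def by auto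
  qed
  show ?thesis unfolding weighting_def using a b c by blast
qed

theorem lemma3:
  fixes \<Omega> :: "(nat \<times> (('d::finite list \<Rightarrow> 'd) \<Rightarrow> real)) set"
    and n k :: nat
    and ar :: "nat \<Rightarrow> nat"
    and \<omega> :: "nat \<Rightarrow> (('d list \<Rightarrow> 'd) \<Rightarrow> real)"
    and c :: "nat \<Rightarrow> real"
    and g :: "nat \<Rightarrow> nat \<Rightarrow> ('d list \<Rightarrow> 'd)"
  assumes "CARD('d) \<ge> 2"
    and "weighted_clone \<Omega>"
    and "0 < k"
    and "\<forall>i<n. (ar i, \<omega> i) \<in> \<Omega>"
    and "\<forall>i<n. c i \<ge> 0"
    and "\<forall>i<n. \<forall>j<ar i. g i j \<in> ops k \<and> (k, g i j) \<in> supp \<Omega>"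
    and "weighting k (\<lambda>f. \<Sum>i<n. c i * wsuperpos k (\<omega> i) (map (g i) [0..<ar i]) f)"
  shows "(k, (\<lambda>f. \<Sum>i<n. c i * wsuperpos k (\<omega> i) (map (g i) [0..<ar i]) f)) \<in> \<Omega>"
proof -
  note WC = assms(2)[unfolded weighted_clone_def]
  have ne: "\<Omega> \<noteq> {}" using WC by (rule conjunct1)
  have pos: "\<And>k w. (k, w) \<in> \<Omega> \<Longrightarrow> 0 < k \<and> weighting k w"
    using WC[THEN conjunct2, THEN conjunct1] by fast
  have scal: "\<And>k w c. (k, w) \<in> \<Omega> \<Longrightarrow> c \<ge> 0 \<Longrightarrow> (k, (\<lambda>f. c * w f)) \<in> \<Omega>"
    using WC[THEN conjunct2, THEN conjunct2, THEN conjunct1] by fast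
  have add: "\<And>k w1 w2. (k, w1) \<in> \<Omega> \<Longrightarrow> (k, w2) \<in> \<Omega> \<Longrightarrow> (k, (\<lambda>f. w1 f + w2 f)) \<in> \<Omega>"
    using WC[THEN conjunct2, THEN conjunct2, THEN conjunct2, THEN conjunct1] by fast
  have sup: "\<And>l w k gs. (l, w) \<in> \<Omega> \<Longrightarrow> 0 < k \<Longrightarrow> length gs = l \<Longrightarrow>
        (\<forall>g \<in> set gs. g \<in> ops k \<and> (k, g) \<in> supp \<Omega>) \<Longrightarrow>
        weighting k (wsuperpos k w gs) \<Longrightarrow> (k, wsuperpos k w gs) \<in> \<Omega>"
    using WC[THEN conjunct2, THEN conjunct2, THEN conjunct2, THEN conjunct2, THEN conjunct1] by fast
  have projsupp: "\<And>K t. 0 < K \<Longrightarrow> t < K \<Longrightarrow> proj K t \<in> ops K \<and> (K, proj K t) \<in> supp \<Omega>"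
    unfolding supp_def projs_def ops_def proj_def by auto
  define \<mu> where "\<mu> = (\<lambda>f. \<Sum>i<n. c i * wsuperpos k (\<omega> i) (map (g i) [0..<ar i]) f)"
  show ?thesis
  proof (cases "n = 0")
    case True
    obtain k0 w0 where kw: "(k0, w0) \<in> \<Omega>" using ne by auto
    have z: "(k0, (\<lambda>f. 0 * w0 f)) \<in> \<Omega>" by (rule scal[OF kw]) simp
    have z': "(k0, (\<lambda>f. 0)) \<in> \<Omega>" using z by simp
    let ?gs = "replicate k0 (proj k 0 :: 'd list \<Rightarrow> 'd)"
    have ws: "wsuperpos k (\<lambda>f. 0) ?gs = (\<lambda>f. 0)" unfolding wsuperpos_def by simp
    have "(k, wsuperpos k (\<lambda>f. 0) ?gs) \<in> \<Omega>"
      apply (rule sup[OF z' assms(3)])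
      using projsupp[OF assms(3) assms(3)] assms(7) True ws by auto
    then show ?thesis using True ws by simp
  next
    case False
    define M where "M = (\<Sum>i<n. ar i) + 1"
    have arM: "\<And>i. i < n \<Longrightarrow> ar i < M"
      unfolding M_def using member_le_sum[of _ "{..<n}" ar] by fastforce
    define L where "L = n * M"
    have L0: "0 < L" unfolding L_def M_def using False by simp
    have sig: "\<And>i j. i < n \<Longrightarrow> j < M \<Longrightarrow> i * M + j < L"
    proof -
      fix i j assume "i < n" "j < M"
      then have "i * M + j < i * M + M" by simp
      also have "\<dots> = Suc i * M" by simp
      also have "\<dots> \<le> n * M" using \<open>i < n\<close> by (intro mult_right_mono) auto
      finally show "i * M + j < L" unfolding L_def .
    qed
    define \<omega>' where "\<omega>' = (\<lambda>i. wsuperpos L (\<omega> i) (map (\<lambda>j. proj L (i * M + j)) [0..<ar i]))"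
    have lift: "(L, \<omega>' i) \<in> \<Omega>" if "i < n" for i
      unfolding \<omega>'_def
    proof (rule sup)
      show "(ar i, \<omega> i) \<in> \<Omega>" using assms(4) that by auto
      show "0 < L" by (rule L0)
      show "length (map (\<lambda>j. proj L (i * M + j)) [0..<ar i]) = ar i" by simp
      show "\<forall>g\<in>set (map (\<lambda>j. proj L (i * M + j)) [0..<ar i]). g \<in> ops L \<and> (L, g) \<in> supp \<Omega>"
      proof
        fix h :: "'d list \<Rightarrow> 'd" assume "h \<in> set (map (\<lambda>j. proj L (i * M + j)) [0..<ar i])"
        then obtain j where j: "j < ar i" "h = proj L (i * M + j)" by auto
        have "i * M + j < L" using sig[OF that] arM[OF that] j(1) by simp
        then show "h \<in> ops L \<and> (L, h) \<in> supp \<Omega>" using projsupp[OF L0, of "i * M + j"] j(2) by simp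
      qed
      show "weighting L (wsuperpos L (\<omega> i) (map (\<lambda>j. proj L (i * M + j)) [0..<ar i]))"
        apply (rule weighting_lift)
        using pos[OF \<open>(ar i, \<omega> i) \<in> \<Omega>\<close>] sig[OF that] arM[OF that] by auto
    qed
    have sums: "m \<le> n \<Longrightarrow> (L, (\<lambda>f. \<Sum>i<m. c i * \<omega>' i f)) \<in> \<Omega>" for m
    proof (induction m)
      case 0
      have "(L, \<omega>' 0) \<in> \<Omega>" using lift False by simp
      then have "(L, (\<lambda>f. 0 * \<omega>' 0 f)) \<in> \<Omega>" by (rule scal) simp
      then show ?case by simp
    next
      case (Suc m)
      have "(L, (\<lambda>f. (\<Sum>i<m. c i * \<omega>' i f) + c m * \<omega>' m f)) \<in> \<Omega>"
        apply (rule add)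
        using Suc lift scal assms(5) by auto
      then show ?case by simp
    qed
    define g' where "g' = (\<lambda>i j. if j < ar i then g i j else proj k 0)"
    define G where "G = map (\<lambda>t. g' (t div M) (t mod M)) [0..<L]"
    have lenG: "length G = L" unfolding G_def by simp
    have Gset: "\<forall>h\<in>set G. h \<in> ops k \<and> (k, h) \<in> supp \<Omega>"
    proof
      fix h assume "h \<in> set G"
      then obtain t where t: "t < L" "h = g' (t div M) (t mod M)" unfolding G_def by auto
      have "t div M < n" using t(1) unfolding L_def
        by (simp add: less_mult_imp_div_less)
      then show "h \<in> ops k \<and> (k, h) \<in> supp \<Omega>"
        using t assms(6) projsupp[OF assms(3) assms(3)] unfolding g'_def by auto
    qed
    have Gidx: "G ! (i * M + j) = g i j" if "i < n" "j < ar i" for i j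
    proof -
      have M0: "0 < M" unfolding M_def by simp
      have "j < M" using arM[OF that(1)] that(2) by simp
      then show ?thesis unfolding G_def g'_def using sig[OF that(1)] that M0 by auto
    qed
    have sp: "superpos k (proj L t) G = G ! t" if "t < L" for t
    proof -
      have "G ! t \<in> ops k" using Gset that lenG by auto
      then show ?thesis using that lenG unfolding superpos_def proj_def ops_def
        by (auto simp: fun_eq_iff)
    qed
    have eq: "wsuperpos k (\<lambda>f. \<Sum>i<n. c i * \<omega>' i f) G = \<mu>"
    proof
      fix f'
      have "wsuperpos k (\<lambda>f. \<Sum>i<n. c i * \<omega>' i f) G f' = (\<Sum>i<n. c i * wsuperpos k (\<omega>' i) G f')"
        by (rule wsuperpos_lin)
      also have "\<dots> = \<mu> f'" unfolding \<mu>_def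
      proof (intro sum.cong refl)
        fix i assume "i \<in> {..<n}"
        then have i: "i < n" by simp
        have meq: "map (\<lambda>p. superpos k p G) (map (\<lambda>j. proj L (i * M + j)) [0..<ar i]) = map (g i) [0..<ar i]"
          using sp sig[OF i] arM[OF i] Gidx[OF i] by auto
        show "c i * wsuperpos k (\<omega>' i) G f' = c i * wsuperpos k (\<omega> i) (map (g i) [0..<ar i]) f'"
          unfolding \<omega>'_def wsuperpos_comp[OF lenG] meq by (rule refl)
      qed
      finally show "wsuperpos k (\<lambda>f. \<Sum>i<n. c i * \<omega>' i f) G f' = \<mu> f'" .
    qed
    have "(k, wsuperpos k (\<lambda>f. \<Sum>i<n. c i * \<omega>' i f) G) \<in> \<Omega>"
      apply (rule sup[OF sums[OF order_refl] assms(3) lenG Gset])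
      using eq assms(7) unfolding \<mu>_def by simp
    then show ?thesis using eq unfolding \<mu>_def by simp
  qed
qed


end
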